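(* Let $X$ be an integral regular projective curve of genus $g$ over $\mathbb{F}_q$ and let $\mathbf{n}_m=(n_0,\dots,n_m)$ ($m\ge0$) be a tuple of positive integers. Then the $\mathbf{n}_m$-derived zeta function satisfies the functional equation $\widehat\zeta^{(\mathbf{n}_m)}_X(1-s)=\widehat\zeta^{(\mathbf{n}_m)}_X(s)$.
   Context: Let $\zeta_X(s)=\sum_{D\ge 0}N(D)^{-s}$ be the Artin zeta function of $X$ ($D$ running over effective divisors) and $\widehat\zeta_X(s)=q^{s(g-1)}\zeta_X(s)$ the complete Artin zeta function, a rational function of $q^{-s}$. Derived zeta functions are defined recursively. For the empty tuple $\mathbf{n}_{-1}=()$ put $q_{\mathbf{n}_{-1}}=q$, $T_{\mathbf{n}_{-1}}=q^{-s}$, $\widehat\zeta^{(\mathbf{n}_{-1})}_X=\widehat\zeta_X$. For a tuple $\mathbf{n}_m=(n_0,\dots,n_m)$ of positive integers ($m\ge 0$) put $\mathbf{n}_{m-1}=(n_0,\dots,n_{m-1})$, $q_{\mathbf{n}_m}=q^{n_0n_1\cdots n_m}$, $T_{\mathbf{n}_m}=q^{-n_0n_1\cdots n_m s}$. Writing $\widehat Z^{(\mathbf{n}_{m-1})}_X(T_{\mathbf{n}_{m-1}}):=\widehat\zeta^{(\mathbf{n}_{m-1})}_X(s)$ (a rational function of $T_{\mathbf{n}_{m-1}}$), set $\widehat\zeta^{(\mathbf{n}_{m-1})}_X(1):=\operatorname{Res}_{T_{\mathbf{n}_{m-1}}=1}\widehat Z^{(\mathbf{n}_{m-1})}_X(T_{\mathbf{n}_{m-1}})$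 and for integers $N\ge 1$, $\widehat v_N:=\prod_{k=1}^{N}\widehat\zeta^{(\mathbf{n}_{m-1})}_X(k)$. Then $$\widehat\zeta^{(\mathbf{n}_m)}_X(s)=q_{\mathbf{n}_{m-1}}^{\binom{n_m}{2}(g-1)}\sum_{a=1}^{n_m}\Biggl(\sum_{\substack{k_1,\dots,k_p>0\\k_1+\cdots+k_p=n_m-a}}\frac{\widehat v_{k_1}\cdots\widehat v_{k_p}}{\prod_{j=1}^{p-1}(1-q_{\mathbf{n}_{m-1}}^{k_j+k_{j+1}})}\cdot\frac{1}{1-q_{\mathbf{n}_{m-1}}^{n_ms-n_m+a+k_p}}\Biggr)\widehat\zeta^{(\mathbf{n}_{m-1})}_X(n_ms-n_m+a)\Biggl(\sum_{\substack{l_1,\dots,l_r>0\\l_1+\cdots+l_r=a-1}}\frac{1}{1-q_{\mathbf{n}_{m-1}}^{-n_ms+n_m-a+1+l_1}}\cdot\frac{\widehat v_{l_1}\cdots\widehat v_{l_r}}{\prod_{j=1}^{r-1}(1-q_{\mathbf{n}_{m-1}}^{l_j+l_{j+1}})}\Biggr),$$ where the inner sums run over ordered tuples of positive integers (of any length) with the indicated sum, and an inner sum over tuples summing to $0$ is defined to be $1$. (For $m=0$ this is the $\mathrm{SL}_{n_0}$-zeta function of $X$, which coincides with the rank $n_0$ non-abelian zeta function of $X$.) *)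

theory Defs
  imports "HOL-Complex_Analysis.Complex_Analysis" "HOL-Computational_Algebra.Polynomial"
begin

text \<open>The curve X over F_q enters only through its zeta function
  Z_X(T) = P(T) / ((1 - T)(1 - q T)), P the L-polynomial of X (integer coefficients).
  All zeta functions are represented as functions of the variable T = q_n^(-s).\<close>

text \<open>Complete Artin zeta function as function of T = q^(-s):
  hat Z_X(T) = T^(1-g) P(T) / ((1-T)(1-qT)), since q^(s(g-1)) = T^(1-g).\<close>
definition base_zhat :: "real \<Rightarrow> nat \<Rightarrow> int poly \<Rightarrow> complex \<Rightarrow> complex" where
  "base_zhat q g P T =
     T powi (1 - int g) * poly (map_poly of_int P) T / ((1 - T) * (1 - of_real q * T))"

definition comps :: "nat \<Rightarrow> nat list set" where
  "comps m = {ks. sum_list ks = m \<and> (\<forall>k\<in>set ks. 0 < k)}"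

text \<open>The special values hat zeta(k) of the previous zeta function (variable T, q-parameter Q):
  hat zeta(1) = residue at T = 1, hat zeta(k) = hat Z(Q^(-k)) for k >= 2.\<close>
definition zval :: "complex \<Rightarrow> (complex \<Rightarrow> complex) \<Rightarrow> nat \<Rightarrow> complex" where
  "zval Q Zp k = (if k = 1 then residue Zp 1 else Zp (Q powi (- int k)))"

definition vhat :: "complex \<Rightarrow> (complex \<Rightarrow> complex) \<Rightarrow> nat \<Rightarrow> complex" where
  "vhat Q Zp N = (\<Prod>k=1..N. zval Q Zp k)"

definition pair_denom :: "complex \<Rightarrow> nat list \<Rightarrow> complex" where
  "pair_denom Q ks = (\<Prod>j<length ks - 1. (1 - Q ^ (ks ! j + ks ! (j + 1))))"

text \<open>Left inner sum, as a function of the new variable T' = Q^(-n s):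
  Q^(n s - n + a + k_p) = Q^(a + k_p - n) / T'.\<close>
definition left_sum :: "complex \<Rightarrow> (complex \<Rightarrow> complex) \<Rightarrow> nat \<Rightarrow> nat \<Rightarrow> complex \<Rightarrow> complex" where
  "left_sum Q Zp n a T =
     (\<Sum>ks\<in>comps (n - a).
        if ks = [] then 1
        else prod_list (map (vhat Q Zp) ks) / pair_denom Q ks
             * (1 / (1 - Q powi (int (a + last ks) - int n) / T)))"

text \<open>Right inner sum: Q^(-n s + n - a + 1 + l_1) = T' * Q^(n - a + 1 + l_1).\<close>
definition right_sum :: "complex \<Rightarrow> (complex \<Rightarrow> complex) \<Rightarrow> nat \<Rightarrow> nat \<Rightarrow> complex \<Rightarrow> complex" where
  "right_sum Q Zp n a T =
     (\<Sum>ls\<in>comps (a - 1).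
        if ls = [] then 1
        else (1 / (1 - T * Q ^ (n - a + 1 + hd ls)))
             * (prod_list (map (vhat Q Zp) ls) / pair_denom Q ls))"

text \<open>One derivation step: from hat Z^(n_(m-1)) (in T = Q^(-s), Q = q_(n_(m-1)))
  to hat Z^(n_m) (in T' = Q^(-n_m s)); note hat zeta^(n_(m-1))(n_m s - n_m + a)
  = hat Z^(n_(m-1))(T' * Q^(n_m - a)).\<close>
definition derive_step :: "nat \<Rightarrow> complex \<Rightarrow> (complex \<Rightarrow> complex) \<Rightarrow> nat \<Rightarrow> complex \<Rightarrow> complex" where
  "derive_step g Q Zp n T =
     Q powi (int (n choose 2) * (int g - 1)) *
     (\<Sum>a=1..n. left_sum Q Zp n a T * Zp (T * Q ^ (n - a)) * right_sum Q Zp n a T)"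

text \<open>Derived zeta function for the tuple given in reversed order (last entry first).\<close>
fun dzhat_rev :: "real \<Rightarrow> nat \<Rightarrow> int poly \<Rightarrow> nat list \<Rightarrow> complex \<Rightarrow> complex" where
  "dzhat_rev q g P [] = base_zhat q g P"
| "dzhat_rev q g P (n # ns) = derive_step g (of_real (q ^ prod_list ns)) (dzhat_rev q g P ns) n"

definition dzhat :: "real \<Rightarrow> nat \<Rightarrow> int poly \<Rightarrow> nat list \<Rightarrow> complex \<Rightarrow> complex" where
  "dzhat q g P ns = dzhat_rev q g P (rev ns)"

definition dzeta :: "real \<Rightarrow> nat \<Rightarrow> int poly \<Rightarrow> nat list \<Rightarrow> complex \<Rightarrow> complex" where
  "dzeta q g P ns s = dzhat q g P ns (of_real (q ^ prod_list ns) powr (- s))"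

end

theory Submission
  imports Defs
begin

lemma pair_denom_rev: "pair_denom Q (rev ks) = pair_denom Q ks"
proof -
  let ?L = "length ks"
  let ?f = "\<lambda>j. 1 - Q ^ (ks ! j + ks ! (j + 1))"
  have "pair_denom Q (rev ks) = (\<Prod>j<?L - 1. ?f (?L - 1 - Suc j))"
    unfolding pair_denom_def
  proof (rule prod.cong)
    fix j assume j: "j \<in> {..<?L - 1}"
    then have "rev ks ! j = ks ! (?L - 1 - j)" "rev ks ! (j+1) = ks ! (?L - 1 - Suc j)"
      by (auto simp: rev_nth)
    moreover have "?L - 1 - j = ?L - 1 - Suc j + 1" using j by auto
    ultimately show "1 - Q ^ (rev ks ! j + rev ks ! (j + 1)) = ?f (?L - 1 - Suc j)"
      by (metis add.commute)
  qed simp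
  also have "\<dots> = (\<Prod>j<?L - 1. ?f j)" by (rule prod.nat_diff_reindex)
  finally show ?thesis unfolding pair_denom_def .
qed

lemma comps_rev: "bij_betw rev (comps m) (comps m)"
  unfolding comps_def
  by (rule bij_betw_byWitness[where f'=rev]) (auto simp: sum_list_rev)

lemma powi_diff_nat: "(Q::complex) \<noteq> 0 \<Longrightarrow> Q powi (int m - int n) = Q ^ m / Q ^ n"
  by (simp add: power_int_diff)

lemma left_swap:
  assumes Q: "Q \<noteq> 0" and T: "T \<noteq> 0" and a: "1 \<le> a" "a \<le> n"
  shows "left_sum Q Zp n a (1 / (Q ^ n * T)) = right_sum Q Zp n (n + 1 - a) T"
proof -
  have c: "n + 1 - a - 1 = n - a" "n - (n + 1 - a) + 1 = a" using a by auto
  have "right_sum Q Zp n (n + 1 - a) T =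
     (\<Sum>ls\<in>comps (n - a). if ls = [] then 1
        else (1 / (1 - T * Q ^ (a + hd ls))) * (prod_list (map (vhat Q Zp) ls) / pair_denom Q ls))"
    unfolding right_sum_def c by simp
  also have "\<dots> = (\<Sum>ks\<in>comps (n - a). if rev ks = [] then 1
        else (1 / (1 - T * Q ^ (a + hd (rev ks)))) * (prod_list (map (vhat Q Zp) (rev ks)) / pair_denom Q (rev ks)))"
    by (rule sum.reindex_bij_betw[OF comps_rev, symmetric])
  also have "\<dots> = left_sum Q Zp n a (1 / (Q ^ n * T))"
    unfolding left_sum_def
  proof (rule sum.cong[OF refl])
    fix ks :: "nat list"
    have e: "Q powi (int (a + last ks) - int n) / (1 / (Q ^ n * T)) = T * Q ^ (a + last ks)"
      unfolding powi_diff_nat[OF Q, of "a + last ks" n] using Q by simp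
    show "(if rev ks = [] then 1
        else (1 / (1 - T * Q ^ (a + hd (rev ks)))) * (prod_list (map (vhat Q Zp) (rev ks)) / pair_denom Q (rev ks))) =
       (if ks = [] then 1 else prod_list (map (vhat Q Zp) ks) / pair_denom Q ks *
             (1 / (1 - Q powi (int (a + last ks) - int n) / (1 / (Q ^ n * T)))))"
      unfolding e by (simp add: pair_denom_rev hd_rev rev_map[symmetric] prod_list.rev mult.commute)
  qed
  finally show ?thesis by simp
qed

lemma right_swap:
  assumes Q: "Q \<noteq> 0" and T: "T \<noteq> 0" and a: "1 \<le> a" "a \<le> n"
  shows "right_sum Q Zp n a (1 / (Q ^ n * T)) = left_sum Q Zp n (n + 1 - a) T"
proof -
  have c: "n - (n + 1 - a) = a - 1" using a by auto
  have "n + 1 - a + hd ls = n - a + 1 + hd ls" for ls using a by simp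
  have "left_sum Q Zp n (n + 1 - a) T =
     (\<Sum>ks\<in>comps (a - 1). if ks = [] then 1
        else prod_list (map (vhat Q Zp) ks) / pair_denom Q ks
             * (1 / (1 - Q powi (int (n + 1 - a + last ks) - int n) / T)))"
    unfolding left_sum_def c by simp
  also have "\<dots> = (\<Sum>ls\<in>comps (a - 1). if rev ls = [] then 1
        else prod_list (map (vhat Q Zp) (rev ls)) / pair_denom Q (rev ls)
             * (1 / (1 - Q powi (int (n + 1 - a + last (rev ls)) - int n) / T)))"
    by (rule sum.reindex_bij_betw[OF comps_rev, symmetric])
  also have "\<dots> = right_sum Q Zp n a (1 / (Q ^ n * T))"
    unfolding right_sum_def
  proof (rule sum.cong[OF refl])
    fix ls :: "nat list"
    have e: "Q powi (int (n + 1 - a + hd ls) - int n) / T = 1 / (Q ^ n * T) * Q ^ (n - a + 1 + hd ls)"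
      unfolding \<open>n + 1 - a + hd ls = n - a + 1 + hd ls\<close>
      unfolding powi_diff_nat[OF Q, of "n - a + 1 + hd ls" n] using Q a
      by (simp add: field_simps)
    show "(if rev ls = [] then 1
        else prod_list (map (vhat Q Zp) (rev ls)) / pair_denom Q (rev ls)
             * (1 / (1 - Q powi (int (n + 1 - a + last (rev ls)) - int n) / T))) =
       (if ls = [] then 1 else (1 / (1 - 1 / (Q ^ n * T) * Q ^ (n - a + 1 + hd ls)))
             * (prod_list (map (vhat Q Zp) ls) / pair_denom Q ls))"
      unfolding last_rev e by (simp add: pair_denom_rev rev_map[symmetric] prod_list.rev mult.commute)
  qed
  finally show ?thesis by simp
qed

lemma step_FE:
  assumes Q: "Q \<noteq> 0" and FE: "\<And>T. T \<noteq> 0 \<Longrightarrow> Zp (1 / (Q * T)) = Zp T"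
    and T: "T \<noteq> 0"
  shows "derive_step g Q Zp n (1 / (Q ^ n * T)) = derive_step g Q Zp n T"
proof -
  have "(\<Sum>a=1..n. left_sum Q Zp n a (1 / (Q ^ n * T)) * Zp (1 / (Q ^ n * T) * Q ^ (n - a))
          * right_sum Q Zp n a (1 / (Q ^ n * T)))
      = (\<Sum>a=1..n. right_sum Q Zp n (n + 1 - a) T * Zp (T * Q ^ (n - (n + 1 - a)))
          * left_sum Q Zp n (n + 1 - a) T)"
  proof (rule sum.cong[OF refl])
    fix a assume a: "a \<in> {1..n}"
    have pw: "Q ^ n = Q * Q ^ (a - 1) * Q ^ (n - a)"
      using a by (simp add: power_add[symmetric] power_Suc[symmetric])
    have "Zp (1 / (Q ^ n * T) * Q ^ (n - a)) = Zp (1 / (Q * (Q ^ (a - 1) * T)))"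
      using Q by (simp add: pw field_simps)
    also have "\<dots> = Zp (Q ^ (a - 1) * T)" using Q T by (intro FE) simp
    also have "\<dots> = Zp (T * Q ^ (n - (n + 1 - a)))" using a by (simp add: mult.commute)
    finally show "left_sum Q Zp n a (1 / (Q ^ n * T)) * Zp (1 / (Q ^ n * T) * Q ^ (n - a))
          * right_sum Q Zp n a (1 / (Q ^ n * T)) = right_sum Q Zp n (n + 1 - a) T * Zp (T * Q ^ (n - (n + 1 - a)))
          * left_sum Q Zp n (n + 1 - a) T"
      using a left_swap[OF Q T, of a n Zp] right_swap[OF Q T, of a n Zp] by simp
  qed
  also have "\<dots> = (\<Sum>b=1..n. right_sum Q Zp n b T * Zp (T * Q ^ (n - b)) * left_sum Q Zp n b T)"
    using sum.atLeastAtMost_rev[of "\<lambda>b. right_sum Q Zp n b T * Zp (T * Q ^ (n - b)) * left_sum Q Zp n b T" 1 n]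
    by (simp add: add.commute)
  also have "\<dots> = (\<Sum>b=1..n. left_sum Q Zp n b T * Zp (T * Q ^ (n - b)) * right_sum Q Zp n b T)"
    by (simp add: mult.commute mult.left_commute)
  finally show ?thesis unfolding derive_step_def by simp
qed


lemma base_FE:
  fixes q :: real and T :: complex
  assumes q: "q > 0" and T: "T \<noteq> 0"
    and FE: "\<forall>T::complex. T \<noteq> 0 \<longrightarrow>
              poly (map_poly of_int P) T
              = of_real q ^ g * T ^ (2 * g) * poly (map_poly of_int P) (1 / (of_real q * T))"
  shows "base_zhat q g P (1 / (of_real q * T)) = base_zhat q g P T"
proof -
  define p where "p = poly (map_poly (of_int :: int \<Rightarrow> complex) P)"
  define Q where "Q = (of_real q :: complex)"
  have Q: "Q \<noteq> 0" using q by (simp add: Q_def)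
  have fe: "p T = Q ^ g * T ^ (2 * g) * p (1 / (Q * T))" using FE T by (simp add: p_def Q_def)
  have d: "(1 - 1 / (Q * T)) * (1 - Q * (1 / (Q * T))) = (1 - T) * (1 - Q * T) / (Q * T ^ 2)"
    using Q T by (simp add: field_simps power2_eq_square)
  have p1: "(1 / (Q * T)) powi (1 - int g) = (1 / (Q * T)) / (1 / (Q * T)) ^ g"
    using Q T by (simp add: power_int_diff)
  have p2: "T powi (1 - int g) = T / T ^ g"
    using Q T by (simp add: power_int_diff)
  have num: "(1 / (Q * T)) powi (1 - int g) * p (1 / (Q * T)) * (Q * T ^ 2) = T powi (1 - int g) * p T"
    unfolding p1 p2 fe using Q T
    by (simp add: field_simps power_mult_distrib power2_eq_square mult_2 mult_2_right power_add)
  have "base_zhat q g P (1 / (of_real q * T)) =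
     (1 / (Q * T)) powi (1 - int g) * p (1 / (Q * T)) * (Q * T ^ 2) / ((1 - T) * (1 - Q * T))"
    unfolding base_zhat_def p_def[symmetric] Q_def[symmetric] d by simp
  also have "\<dots> = base_zhat q g P T"
    unfolding num base_zhat_def p_def[symmetric] Q_def[symmetric] ..
  finally show ?thesis .
qed


lemma rev_FE:
  fixes q :: real
  assumes q: "q > 0"
    and FE: "\<forall>T::complex. T \<noteq> 0 \<longrightarrow>
              poly (map_poly of_int P) T
              = of_real q ^ g * T ^ (2 * g) * poly (map_poly of_int P) (1 / (of_real q * T))"
  shows "\<forall>T. T \<noteq> 0 \<longrightarrow>
    dzhat_rev q g P ns (1 / (of_real (q ^ prod_list ns) * T)) = dzhat_rev q g P ns T"
proof (induction ns)
  case Nil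
  then show ?case using base_FE[OF q _ FE] by simp
next
  case (Cons n ns)
  define Q where "Q = (of_real (q ^ prod_list ns) :: complex)"
  have Q: "Q \<noteq> 0" using q by (simp add: Q_def)
  have QQ: "(of_real (q ^ prod_list (n # ns)) :: complex) = Q ^ n"
    by (simp add: Q_def power_mult[symmetric] mult.commute)
  show ?case
  proof (intro allI impI)
    fix T :: complex assume T: "T \<noteq> 0"
    show "dzhat_rev q g P (n # ns) (1 / (of_real (q ^ prod_list (n # ns)) * T)) = dzhat_rev q g P (n # ns) T"
      unfolding QQ dzhat_rev.simps Q_def[symmetric]
      by (rule step_FE[OF Q _ T]) (use Cons.IH in \<open>simp add: Q_def\<close>)
  qed
qed

theorem theorem2p2:
  fixes q :: real and g :: nat and P :: "int poly" and ns :: "nat list"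
  assumes q_pp: "\<exists>p e. prime (p::nat) \<and> 0 < e \<and> q = real (p ^ e)"
    and deg: "degree P = 2 * g"
    and P0: "coeff P 0 = 1"
    and FE: "\<forall>T::complex. T \<noteq> 0 \<longrightarrow>
              poly (map_poly of_int P) T
              = of_real q ^ g * T ^ (2 * g) * poly (map_poly of_int P) (1 / (of_real q * T))"
    and RH: "\<forall>z::complex. poly (map_poly of_int P) z = 0 \<longrightarrow> norm z = 1 / sqrt q"
    and h_pos: "poly P 1 > 0"
    and ns_ne: "ns \<noteq> []"
    and ns_pos: "\<forall>n\<in>set ns. 0 < n"
  shows "\<exists>F::complex set. finite F \<and>
           (\<forall>s::complex.
              of_real (q ^ prod_list ns) powr (- s) \<notin> F \<and>
              of_real (q ^ prod_list ns) powr (- (1 - s)) \<notin> F \<longrightarrow>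
              dzeta q g P ns (1 - s) = dzeta q g P ns s)"
proof -
  obtain p e where pe: "prime (p::nat)" "0 < e" "q = real (p ^ e)" using q_pp by blast
  have q: "q > 0" using pe prime_gt_0_nat by simp
  have R: "\<forall>T. T \<noteq> 0 \<longrightarrow>
    dzhat_rev q g P (rev ns) (1 / (of_real (q ^ prod_list ns) * T)) = dzhat_rev q g P (rev ns) T"
    using rev_FE[OF q FE, of "rev ns"] by (simp add: prod_list.rev)
  define X where "X = (of_real (q ^ prod_list ns) :: complex)"
  have X: "X \<noteq> 0" using q by (simp add: X_def)
  have "dzeta q g P ns (1 - s) = dzeta q g P ns s" for s
  proof -
    have nz: "X powr (- s) \<noteq> 0" using X by (simp add: powr_def)
    have e: "X powr (- (1 - s)) = 1 / (X * X powr (- s))"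
    proof -
      have "X powr (- (1 - s)) = X powr (s - 1)" by simp
      also have "\<dots> = X powr s / X" by (simp add: powr_diff)
      also have "\<dots> = 1 / (X * X powr (- s))" using X by (simp add: powr_minus field_simps)
      finally show ?thesis .
    qed
    show ?thesis
      unfolding dzeta_def dzhat_def X_def[symmetric] e
      using R nz unfolding X_def by blast
  qed
  then show ?thesis by blast
qed

end
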